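(* In a snark $G$ with $\pi(G)\ge 5$, no apex is incident with a pair of parallel edges.
   Context: Graphs are finite; loops and multiple edges are allowed. A snark is a $2$-connected cubic graph with no proper $3$-edge-colouring. The perfect matching index $\pi(G)$ is the smallest number of perfect matchings of $G$ whose union is $E(G)$. Inflating a vertex $v$ to a triangle means deleting $v$, adding a triangle on three new vertices, and attaching the three edge-ends formerly incident with $v$ to the three distinct vertices of the triangle; the result is denoted $G^v$. A vertex $v$ of a snark $G$ is an apex if $\pi(G^v)=4$. *)

theory Defs
  imports Main "HOL-Library.Extended_Nat"
begin

text \<open>Finite multigraphs (loops and parallel edges allowed). Every edge e has two
ends, indexed by a boolean; endpt e b is the vertex at end b of e. A loop is an
edge whose two ends are the same vertex.\<close>

datatype ('v, 'e) mgraph = MGraph (verts: "'v set") (edges: "'e set") (endpt: "'e \<Rightarrow> bool \<Rightarrow> 'v")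

definition wf_graph :: "('v, 'e) mgraph \<Rightarrow> bool" where
  "wf_graph G \<longleftrightarrow> finite (verts G) \<and> finite (edges G) \<and>
     (\<forall>e\<in>edges G. \<forall>b. endpt G e b \<in> verts G)"

text \<open>Edge-ends (half-edges) at a vertex; a loop contributes two.\<close>
definition halfedges :: "('v, 'e) mgraph \<Rightarrow> 'v \<Rightarrow> ('e \<times> bool) set" where
  "halfedges G v = {(e, b). e \<in> edges G \<and> endpt G e b = v}"

definition degree :: "('v, 'e) mgraph \<Rightarrow> 'v \<Rightarrow> nat" where
  "degree G v = card (halfedges G v)"

definition cubic :: "('v, 'e) mgraph \<Rightarrow> bool" where
  "cubic G \<longleftrightarrow> (\<forall>v\<in>verts G. degree G v = 3)"

definition adj_in :: "('v, 'e) mgraph \<Rightarrow> 'v set \<Rightarrow> 'v \<Rightarrow> 'v \<Rightarrow> bool" where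
  "adj_in G S x y \<longleftrightarrow> x \<in> S \<and> y \<in> S \<and>
     (\<exists>e\<in>edges G. {endpt G e True, endpt G e False} = {x, y})"

definition connected_on :: "('v, 'e) mgraph \<Rightarrow> 'v set \<Rightarrow> bool" where
  "connected_on G S \<longleftrightarrow> S \<noteq> {} \<and> (\<forall>x\<in>S. \<forall>y\<in>S. (adj_in G S)\<^sup>*\<^sup>* x y)"

definition two_connected :: "('v, 'e) mgraph \<Rightarrow> bool" where
  "two_connected G \<longleftrightarrow> connected_on G (verts G) \<and>
     (\<forall>x\<in>verts G. connected_on G (verts G - {x}))"

text \<open>Proper 3-edge-colouring: edges sharing an end get distinct colours
(so a loop, which meets itself, cannot be coloured).\<close>
definition three_edge_colourable :: "('v, 'e) mgraph \<Rightarrow> bool" where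
  "three_edge_colourable G \<longleftrightarrow> (\<exists>c :: 'e \<Rightarrow> nat.
     (\<forall>e\<in>edges G. c e < 3) \<and>
     (\<forall>v\<in>verts G. inj_on (\<lambda>(e, b). c e) (halfedges G v)))"

definition snark :: "('v, 'e) mgraph \<Rightarrow> bool" where
  "snark G \<longleftrightarrow> wf_graph G \<and> two_connected G \<and> cubic G \<and> \<not> three_edge_colourable G"

definition perfect_matching :: "('v, 'e) mgraph \<Rightarrow> 'e set \<Rightarrow> bool" where
  "perfect_matching G M \<longleftrightarrow> M \<subseteq> edges G \<and>
     (\<forall>v\<in>verts G. card {(e, b). e \<in> M \<and> endpt G e b = v} = 1)"

text \<open>Perfect matching index (infinite if E(G) is not a union of perfect matchings).\<close>
definition pm_index :: "('v, 'e) mgraph \<Rightarrow> enat" where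
  "pm_index G = Inf {enat k | k. \<exists>\<M>. finite \<M> \<and> card \<M> = k \<and>
       (\<forall>M\<in>\<M>. perfect_matching G M) \<and> \<Union>\<M> = edges G}"

text \<open>Inflating v to a triangle, given an assignment f of the edge-ends at v to
the three triangle vertices Inr 0, Inr 1, Inr 2. Triangle edges are Inr 0, Inr 1,
Inr 2, where Inr i joins Inr i and Inr ((i+1) mod 3).\<close>
definition inflate_with :: "('v, 'e) mgraph \<Rightarrow> 'v \<Rightarrow> ('e \<times> bool \<Rightarrow> nat) \<Rightarrow> ('v + nat, 'e + nat) mgraph" where
  "inflate_with G v f = MGraph
     (Inl ` (verts G - {v}) \<union> Inr ` {0, 1, 2})
     (Inl ` edges G \<union> Inr ` {0, 1, 2})
     (\<lambda>x b. case x of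
        Inl e \<Rightarrow> (if endpt G e b = v then Inr (f (e, b)) else Inl (endpt G e b))
      | Inr i \<Rightarrow> (if b then Inr i else Inr ((i + 1) mod 3)))"

text \<open>G^v: the three edge-ends at v attached to distinct triangle vertices
(via some bijection; all choices give isomorphic graphs).\<close>
definition inflate :: "('v, 'e) mgraph \<Rightarrow> 'v \<Rightarrow> ('v + nat, 'e + nat) mgraph" where
  "inflate G v = inflate_with G v (SOME f. bij_betw f (halfedges G v) {0, 1, 2})"

definition apex :: "('v, 'e) mgraph \<Rightarrow> 'v \<Rightarrow> bool" where
  "apex G v \<longleftrightarrow> v \<in> verts G \<and> pm_index (inflate G v) = 4"

definition parallel :: "('v, 'e) mgraph \<Rightarrow> 'e \<Rightarrow> 'e \<Rightarrow> bool" where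
  "parallel G e1 e2 \<longleftrightarrow> e1 \<in> edges G \<and> e2 \<in> edges G \<and> e1 \<noteq> e2 \<and>
     {endpt G e1 True, endpt G e1 False} = {endpt G e2 True, endpt G e2 False}"

definition incident :: "('v, 'e) mgraph \<Rightarrow> 'v \<Rightarrow> 'e \<Rightarrow> bool" where
  "incident G v e \<longleftrightarrow> e \<in> edges G \<and> (endpt G e True = v \<or> endpt G e False = v)"

end

theory Submission imports Defs begin

lemma tri_vertex:
  fixes G :: "('v, 'e) mgraph"
  assumes bij: "bij_betw f (halfedges G v) {0,1,2}"
  and pm: "perfect_matching (inflate_with G v f) M"
  and i: "i \<in> {0,1,2}" and p: "p \<in> {0,1,2::nat}" and pi: "(p+1) mod 3 = i"
  shows "let A = (Inl (fst (inv_into (halfedges G v) f i)) \<in> M); B = (Inr i \<in> M); C = (Inr p \<in> M)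
     in (A \<and> \<not>B \<and> \<not>C) \<or> (\<not>A \<and> B \<and> \<not>C) \<or> (\<not>A \<and> \<not>B \<and> C)"
proof -
  define G' where "G' = inflate_with G v f"
  define h where "h = inv_into (halfedges G v) f i"
  have hH: "h \<in> halfedges G v" and fh: "f h = i"
    using bij i unfolding h_def
    by (auto intro: inv_into_into simp: bij_betw_def f_inv_into_f)
  have Msub: "M \<subseteq> edges G'" using pm unfolding G'_def perfect_matching_def by auto
  have ver: "Inr i \<in> verts G'" using i unfolding G'_def inflate_with_def by auto
  have c1: "card {(x, b). x \<in> M \<and> endpt G' x b = Inr i} = 1"
    using pm ver unfolding G'_def perfect_matching_def by auto
  have eq: "{(x, b). x \<in> M \<and> endpt G' x b = Inr i} =
     (if Inl (fst h) \<in> M then {(Inl (fst h), snd h)} else {}) \<union>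
     (if Inr i \<in> M then {(Inr i, True)} else {}) \<union>
     (if Inr p \<in> M then {(Inr p, False)} else {})" (is "?L = ?R")
  proof
    show "?L \<subseteq> ?R"
    proof
      fix xb assume "xb \<in> ?L"
      then obtain x b where xbd: "xb = (x,b)" and xM: "x \<in> M" and ex: "endpt G' x b = Inr i" by auto
      show "xb \<in> ?R"
      proof (cases x)
        case (Inl e)
        with xM Msub have eE: "e \<in> edges G" unfolding G'_def inflate_with_def by auto
        from ex Inl have ev: "endpt G e b = v" and fe: "f (e,b) = i"
          unfolding G'_def inflate_with_def by (auto split: if_splits)
        have "(e,b) \<in> halfedges G v" using eE ev unfolding halfedges_def by auto
        with fe fh hH bij have "(e,b) = h" unfolding bij_betw_def inj_on_def by metis
        then show ?thesis using xM Inl xbd by auto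
      next
        case (Inr j)
        with xM Msub have j: "j \<in> {0,1,2}" unfolding G'_def inflate_with_def by auto
        from ex Inr have "(b \<and> j = i) \<or> (\<not> b \<and> (j+1) mod 3 = i)"
          unfolding G'_def inflate_with_def by (auto split: if_splits)
        then have "(b \<and> j = i) \<or> (\<not> b \<and> j = p)" using j p pi by auto
        then show ?thesis using xM Inr xbd by auto
      qed
    qed
  next
    have "endpt G' (Inl (fst h)) (snd h) = Inr i"
      using hH fh unfolding G'_def inflate_with_def halfedges_def by auto
    moreover have "endpt G' (Inr p) False = Inr i"
      using pi unfolding G'_def inflate_with_def by auto
    moreover have "endpt G' (Inr i) True = Inr i"
      unfolding G'_def inflate_with_def by auto
    ultimately show "?R \<subseteq> ?L" by (auto split: if_splits)
  qed
  show ?thesis using c1 unfolding eq h_def[symmetric] Let_def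
    by (cases "Inl (fst h) \<in> M"; cases "Inr i \<in> M"; cases "Inr p \<in> M"; simp)
qed

lemma proj_pm:
  fixes G :: "('v, 'e) mgraph"
  assumes wf: "wf_graph G" and vV: "v \<in> verts G"
  and bij: "bij_betw f (halfedges G v) {0,1,2}"
  and par: "parallel G e1 e2" and i1: "incident G v e1" and i2: "incident G v e2"
  and pm: "perfect_matching (inflate_with G v f) M"
  shows "perfect_matching G {e. Inl e \<in> M}"
proof -
  define G' where "G' = inflate_with G v f"
  define N where "N = {e. Inl e \<in> M}"
  define H where "H = halfedges G v"
  have Msub: "M \<subseteq> edges G'" using pm unfolding G'_def perfect_matching_def by auto
  have NE: "N \<subseteq> edges G" using Msub unfolding N_def G'_def inflate_with_def by auto
  have pmc: "\<And>w. w \<in> verts G' \<Longrightarrow> card {(x, b). x \<in> M \<and> endpt G' x b = w} = 1"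
    using pm unfolding G'_def perfect_matching_def by auto
  have endl: "\<And>e b. endpt G e b \<noteq> v \<Longrightarrow> endpt G' (Inl e) b = Inl (endpt G e b)"
    unfolding G'_def inflate_with_def by auto
  have other: "card {(e, b). e \<in> N \<and> endpt G e b = w} = 1" if wV: "w \<in> verts G" and wv: "w \<noteq> v" for w
  proof -
    have seteq: "{(x, b). x \<in> M \<and> endpt G' x b = Inl w} = (\<lambda>(e,b). (Inl e, b)) ` {(e, b). e \<in> N \<and> endpt G e b = w}"
    proof (rule set_eqI, clarify)
      fix x b
      show "((x, b) \<in> {(x, b). x \<in> M \<and> endpt G' x b = Inl w}) = ((x, b) \<in> (\<lambda>(e,b). (Inl e, b)) ` {(e, b). e \<in> N \<and> endpt G e b = w})"
        using wv unfolding G'_def N_def inflate_with_def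
        by (cases x) (auto split: if_splits)
    qed
    have inj: "inj_on (\<lambda>(e,b). (Inl e :: 'e + nat, b)) {(e, b). e \<in> N \<and> endpt G e b = w}"
      by (auto simp: inj_on_def)
    have wV': "Inl w \<in> verts G'" using wV wv unfolding G'_def inflate_with_def by auto
    have "card ((\<lambda>(e,b). (Inl e :: 'e + nat, b)) ` {(e, b). e \<in> N \<and> endpt G e b = w}) = card {(e, b). e \<in> N \<and> endpt G e b = w}"
      by (rule card_image[OF inj])
    then show ?thesis using pmc[OF wV'] unfolding seteq by simp
  qed
  have finH: "finite H" using bij_betw_finite[OF bij] unfolding H_def by simp
  have cH: "card H = 3" using bij_betw_same_card[OF bij] unfolding H_def by simp
  have img: "f ` H = {0,1,2}" and injf: "inj_on f H" using bij unfolding bij_betw_def H_def by simp_all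
  define h where "h i = inv_into H f i" for i
  have hH: "h i \<in> H" if "i \<in> {0,1,2}" for i
    unfolding h_def by (rule inv_into_into) (use that img in simp)
  have fh: "f (h i) = i" if "i \<in> {0,1,2}" for i
    unfolding h_def by (rule f_inv_into_f) (use that img in simp)
  have Heq: "H = {h 0, h 1, h 2}"
  proof
    show "{h 0, h 1, h 2} \<subseteq> H" using hH by simp
    show "H \<subseteq> {h 0, h 1, h 2}"
    proof
      fix x assume xH: "x \<in> H"
      then have fx: "f x \<in> {0,1,2}" using img by blast
      have "h (f x) = x" unfolding h_def using inv_into_f_f[OF injf xH] .
      then show "x \<in> {h 0, h 1, h 2}" using fx by auto
    qed
  qed
  have f012: "f (h 0) = 0" "f (h 1) = 1" "f (h 2) = 2" using fh by auto
  have hd: "h 0 \<noteq> h 1" "h 0 \<noteq> h 2" "h 1 \<noteq> h 2" using f012 by (metis zero_neq_one, metis zero_neq_numeral, metis numeral_One numeral_eq_iff semiring_norm(85))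
  define P where "P i = (Inl (fst (h i)) \<in> M)" for i
  have c0: "(P 0 \<and> \<not>Inr 0 \<in> M \<and> \<not>Inr 2 \<in> M) \<or> (\<not>P 0 \<and> Inr 0 \<in> M \<and> \<not>Inr 2 \<in> M) \<or> (\<not>P 0 \<and> \<not>Inr 0 \<in> M \<and> Inr 2 \<in> M)"
    using tri_vertex[OF bij pm, of 0 2] unfolding P_def h_def H_def Let_def by simp
  have c1: "(P 1 \<and> \<not>Inr 1 \<in> M \<and> \<not>Inr 0 \<in> M) \<or> (\<not>P 1 \<and> Inr 1 \<in> M \<and> \<not>Inr 0 \<in> M) \<or> (\<not>P 1 \<and> \<not>Inr 1 \<in> M \<and> Inr 0 \<in> M)"
    using tri_vertex[OF bij pm, of 1 0] unfolding P_def h_def H_def Let_def by simp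
  have c2: "(P 2 \<and> \<not>Inr 2 \<in> M \<and> \<not>Inr 1 \<in> M) \<or> (\<not>P 2 \<and> Inr 2 \<in> M \<and> \<not>Inr 1 \<in> M) \<or> (\<not>P 2 \<and> \<not>Inr 2 \<in> M \<and> Inr 1 \<in> M)"
    using tri_vertex[OF bij pm, of 2 1] unfolding P_def h_def H_def Let_def by simp
  have Seq: "{(e, b). e \<in> N \<and> endpt G e b = v} = (if P 0 then {h 0} else {}) \<union> (if P 1 then {h 1} else {}) \<union> (if P 2 then {h 2} else {})"
  proof -
    have "{(e, b). e \<in> N \<and> endpt G e b = v} = {x \<in> H. fst x \<in> N}"
      using NE unfolding H_def halfedges_def by auto
    also have "... = (if P 0 then {h 0} else {}) \<union> (if P 1 then {h 1} else {}) \<union> (if P 2 then {h 2} else {})"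
      unfolding Heq P_def N_def by (auto; metis fst_conv)
    finally show ?thesis .
  qed
  have notall: "\<not> (P 0 \<and> P 1 \<and> P 2)"
  proof
    assume allP: "P 0 \<and> P 1 \<and> P 2"
    have inN: "e \<in> N" if "(e, b) \<in> H" for e b
    proof -
      have "(e,b) \<in> {h 0, h 1, h 2}" using that Heq by simp
      then have "e = fst (h 0) \<or> e = fst (h 1) \<or> e = fst (h 2)" by (metis fst_conv insertE empty_iff)
      then show ?thesis using allP unfolding P_def N_def by auto
    qed
    obtain b1 where b1: "endpt G e1 b1 = v" using i1 unfolding incident_def by auto
    obtain b2' where b2': "endpt G e2 b2' = v" using i2 unfolding incident_def by auto
    have e1E: "e1 \<in> edges G" and e2E: "e2 \<in> edges G" and ne: "e1 \<noteq> e2"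
      and seq: "{endpt G e1 True, endpt G e1 False} = {endpt G e2 True, endpt G e2 False}"
      using par unfolding parallel_def by auto
    have e1N: "e1 \<in> N" using inN[of e1 b1] b1 e1E unfolding H_def halfedges_def by auto
    have e2N: "e2 \<in> N" using inN[of e2 b2'] b2' e2E unfolding H_def halfedges_def by auto
    define u where "u = endpt G e1 (\<not> b1)"
    have uv: "u \<noteq> v"
    proof
      assume uv0: "u = v"
      have a: "endpt G e1 True = v \<and> endpt G e1 False = v" using b1 uv0 unfolding u_def by (cases b1) auto
      then have "{endpt G e2 True, endpt G e2 False} = {v}" using seq by simp
      then have a2: "endpt G e2 True = v \<and> endpt G e2 False = v" by blast
      have "{(e1,True),(e1,False),(e2,True),(e2,False)} \<subseteq> H"
        using a a2 e1E e2E unfolding H_def halfedges_def by auto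
      then have "card {(e1,True),(e1,False),(e2,True),(e2,False)} \<le> card H" by (rule card_mono[OF finH])
      then have "card {(e1,True),(e1,False),(e2,True),(e2,False)} \<le> 3" using cH by simp
      then show False using ne by simp
    qed
    obtain b2 where b2: "endpt G e2 b2 = u"
    proof -
      have "u \<in> {endpt G e1 True, endpt G e1 False}" unfolding u_def by (cases b1) auto
      then have "u \<in> {endpt G e2 True, endpt G e2 False}" using seq by simp
      then show ?thesis using that by auto
    qed
    have uV: "u \<in> verts G" using wf e1E unfolding u_def wf_graph_def by auto
    have uV': "Inl u \<in> verts G'" using uV uv unfolding G'_def inflate_with_def by auto
    have m1: "(Inl e1, \<not> b1) \<in> {(x, b). x \<in> M \<and> endpt G' x b = Inl u}"
      using e1N endl[of e1 "\<not> b1"] uv unfolding N_def u_def by auto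
    have m2: "(Inl e2, b2) \<in> {(x, b). x \<in> M \<and> endpt G' x b = Inl u}"
      using e2N endl[of e2 b2] uv b2 unfolding N_def by auto
    from pmc[OF uV'] obtain z where z: "{(x, b). x \<in> M \<and> endpt G' x b = Inl u} = {z}"
      using card_1_singleton_iff[of "{(x, b). x \<in> M \<and> endpt G' x b = Inl u}"] by auto
    have "(Inl e1, \<not> b1) = z" "(Inl e2, b2) = z" using m1 m2 unfolding z by simp_all
    then show False using ne by (metis prod.inject sum.inject(1))
  qed
  have "card {(e, b). e \<in> N \<and> endpt G e b = v} = 1"
  proof -
    have ex1: "(P 0 \<and> \<not> P 1 \<and> \<not> P 2) \<or> (\<not> P 0 \<and> P 1 \<and> \<not> P 2) \<or> (\<not> P 0 \<and> \<not> P 1 \<and> P 2)"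
      using c0 c1 c2 notall by argo
    then show ?thesis unfolding Seq by (elim disjE) simp_all
  qed
  then have vc: "card {(e, b). e \<in> N \<and> endpt G e b = w} = 1" if "w \<in> verts G" for w
    using other that by (cases "w = v") auto
  show ?thesis unfolding perfect_matching_def N_def[symmetric] using NE vc by auto
qed

theorem lemma6p5:
  fixes G :: "('v, 'e) mgraph"
  assumes "snark G" and "pm_index G \<ge> 5" and "apex G v"
  shows "\<not> (\<exists>e1 e2. parallel G e1 e2 \<and> incident G v e1 \<and> incident G v e2)"
proof
  assume "\<exists>e1 e2. parallel G e1 e2 \<and> incident G v e1 \<and> incident G v e2"
  then obtain e1 e2 where par: "parallel G e1 e2" and i1: "incident G v e1" and i2: "incident G v e2"
    by blast
  have wf: "wf_graph G" and cub: "cubic G" using assms(1) unfolding snark_def by auto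
  have vV: "v \<in> verts G" and pi4: "pm_index (inflate G v) = 4" using assms(3) unfolding apex_def by auto
  define H where "H = halfedges G v"
  have "H \<subseteq> edges G \<times> UNIV" unfolding H_def halfedges_def by auto
  moreover have "finite (edges G \<times> (UNIV :: bool set))" using wf unfolding wf_graph_def by simp
  ultimately have finH: "finite H" by (rule finite_subset)
  have cH: "card H = card {0,1,2::nat}" using cub vV unfolding cubic_def degree_def H_def by simp
  have "\<exists>f. bij_betw f H {0,1,2::nat}" by (rule finite_same_card_bij[OF finH _ cH]) simp
  then have bij: "bij_betw (SOME f. bij_betw f H {0,1,2::nat}) H {0,1,2}" by (rule someI_ex)
  define f0 where "f0 = (SOME f. bij_betw f H {0,1,2::nat})"
  have infl: "inflate G v = inflate_with G v f0" unfolding inflate_def f0_def H_def ..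
  define G' where "G' = inflate_with G v f0"
  define A where "A = {enat k | k. \<exists>\<M>. finite \<M> \<and> card \<M> = k \<and>
       (\<forall>M\<in>\<M>. perfect_matching G' M) \<and> \<Union>\<M> = edges G'}"
  have "Inf A = 4" using pi4 unfolding infl pm_index_def A_def G'_def .
  then have "A \<noteq> {}" by (metis Inf_empty infinity_ne_i1 top_enat_def numeral_ne_infinity)
  then obtain a where "a \<in> A" by blast
  then have "Inf A \<in> A" by (rule wellorder_InfI)
  then have "(4::enat) \<in> A" using \<open>Inf A = 4\<close> by simp
  then obtain MM where finMM: "finite MM" and cMM: "card MM = 4" and pmMM: "\<forall>M\<in>MM. perfect_matching G' M"
    and uMM: "\<Union>MM = edges G'"
    unfolding A_def by (auto simp: numeral_eq_enat)
  define MM' where "MM' = (\<lambda>M. {e. Inl e \<in> M}) ` MM"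
  have finMM': "finite MM'" using finMM unfolding MM'_def by simp
  have cMM': "card MM' \<le> 4" using card_image_le[OF finMM, of "\<lambda>M. {e. Inl e \<in> M}"] cMM
    unfolding MM'_def by simp
  have pmMM': "\<forall>M\<in>MM'. perfect_matching G M"
    using proj_pm[OF wf vV bij[folded f0_def, unfolded H_def] par i1 i2] pmMM
    unfolding MM'_def G'_def by auto
  have uMM': "\<Union>MM' = edges G"
  proof
    show "\<Union>MM' \<subseteq> edges G" using pmMM' unfolding perfect_matching_def by auto
    show "edges G \<subseteq> \<Union>MM'"
    proof
      fix e assume "e \<in> edges G"
      then have "Inl e \<in> edges G'" unfolding G'_def inflate_with_def by simp
      then obtain M where "M \<in> MM" "Inl e \<in> M" using uMM by blast
      then show "e \<in> \<Union>MM'" unfolding MM'_def by blast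
    qed
  qed
  have "enat (card MM') \<in> {enat k | k. \<exists>\<M>. finite \<M> \<and> card \<M> = k \<and>
       (\<forall>M\<in>\<M>. perfect_matching G M) \<and> \<Union>\<M> = edges G}"
    using finMM' pmMM' uMM' by blast
  then have "pm_index G \<le> enat (card MM')" unfolding pm_index_def by (rule Inf_lower)
  also have "... \<le> 4" using cMM' by (simp add: numeral_eq_enat)
  finally have "pm_index G \<le> enat 4" by (simp add: numeral_eq_enat)
  then have "enat 5 \<le> enat 4" using assms(2) order_trans by (metis numeral_eq_enat)
  then show False by simp
qed

end
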